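(* Let $d\geq1$, $q>1$, $\frac dq<\alpha<d$ and $\delta>0$. Then there exists $C>0$ such that for every $R>0$ and every measurable function $u$ on $\mathbb{R}^d$, $$\int_{\mathbb{R}^d\setminus B_R(0)}\frac{|u(x)|}{|x|^{\alpha-\frac dq+\delta}}\,dx\leq \frac{C}{R^\delta}\left\|\tfrac{1}{|x|^\alpha}\star|u|\right\|_{L^q(\mathbb{R}^d)}$$ and $$\int_{B_R(0)}\frac{|u(x)|}{|x|^{\alpha-\frac dq-\delta}}\,dx\leq C R^{\delta}\left\|\tfrac{1}{|x|^\alpha}\star|u|\right\|_{L^q(\mathbb{R}^d)}.$$
   Context: $B_R(0)$ is the open ball of radius $R$ centered at the origin and $\star$ denotes convolution. *)

theory Defs
  imports "HOL-Analysis.Analysis"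
begin

definition riesz_conv :: "real \<Rightarrow> ('a::euclidean_space \<Rightarrow> real) \<Rightarrow> 'a \<Rightarrow> ennreal" where
  "riesz_conv \<alpha> u x = (\<integral>\<^sup>+ y. ennreal (\<bar>u y\<bar> / norm (x - y) powr \<alpha>) \<partial>lebesgue)"

definition Lq_norm_enn :: "real \<Rightarrow> ('a::euclidean_space \<Rightarrow> ennreal) \<Rightarrow> ennreal" where
  "Lq_norm_enn q f =
     (let I = (\<integral>\<^sup>+ x. (if f x = \<infinity> then \<infinity> else ennreal (enn2real (f x) powr q)) \<partial>lebesgue)
      in if I = \<infinity> then \<infinity> else ennreal (enn2real I powr (1 / q)))"

end

theory Submission
  imports Defs
begin
lemma Lq_norm_lborel:
  "Lq_norm_enn q v = (let I = (\<integral>\<^sup>+ x. (if v x = \<infinity> then \<infinity> else ennreal (enn2real (v x) powr q)) \<partial>lborel)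
      in if I = \<infinity> then \<infinity> else ennreal (enn2real I powr (1 / q)))"
  unfolding Lq_norm_enn_def by (simp add: nn_integral_completion)

lemma zero_g_int:
  fixes g :: "'a::euclidean_space \<Rightarrow> real" and v :: "'a \<Rightarrow> ennreal"
  assumes p: "p > 0" and g: "g \<in> borel_measurable lborel" "\<forall>y. g y \<ge> 0"
    and G: "(\<integral>\<^sup>+y. ennreal (g y powr p) \<partial>lborel) \<le> 0"
  shows "(\<integral>\<^sup>+y. ennreal (g y) * v y \<partial>lborel) = 0"
proof -
  have "(\<integral>\<^sup>+y. ennreal (g y powr p) \<partial>lborel) = 0" using G by simp
  then have "AE y in lborel. ennreal (g y powr p) = 0"
    by (subst (asm) nn_integral_0_iff_AE) (use g in auto)
  then have "AE y in lborel. ennreal (g y) * v y = 0"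
    by eventually_elim (use g p in auto)
  then have "(\<integral>\<^sup>+y. ennreal (g y) * v y \<partial>lborel) = (\<integral>\<^sup>+y. 0 * v y \<partial>lborel)"
    by (intro nn_integral_cong_AE) auto
  then show ?thesis by simp
qed

lemma holder_enn:
  fixes g :: "'a::euclidean_space \<Rightarrow> real" and v :: "'a \<Rightarrow> ennreal"
  assumes q: "q > 1" and g: "g \<in> borel_measurable lborel" "\<forall>y. g y \<ge> 0"
    and v: "v \<in> borel_measurable lborel"
    and G: "(\<integral>\<^sup>+y. ennreal (g y powr (q/(q-1))) \<partial>lborel) \<le> ennreal G" "G \<ge> 0"
  shows "(\<integral>\<^sup>+y. ennreal (g y) * v y \<partial>lborel) \<le> ennreal (G powr ((q-1)/q)) * Lq_norm_enn q v"
proof -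
  define p where "p = q/(q-1)"
  have p1: "p > 1" using q by (simp add: p_def)
  have pq: "1/p + 1/q = 1" using q by (simp add: p_def field_simps)
  have ip: "1/p = (q-1)/q" using q by (simp add: p_def)
  define I where "I = (\<integral>\<^sup>+ x. (if v x = \<infinity> then \<infinity> else ennreal (enn2real (v x) powr q)) \<partial>lborel)"
  have L: "Lq_norm_enn q v = (if I = \<infinity> then \<infinity> else ennreal (enn2real I powr (1 / q)))"
    unfolding Lq_norm_lborel I_def by simp
  have Gp: "(\<integral>\<^sup>+y. ennreal (g y powr p) \<partial>lborel) \<le> ennreal G" using G p_def by simp
  show ?thesis
  proof (cases "G = 0")
    case True
    then have "(\<integral>\<^sup>+y. ennreal (g y) * v y \<partial>lborel) = 0"
      using zero_g_int[of p g v] Gp g p1 by simp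
    then show ?thesis by simp
  next
    case Gpos: False
    then have Gp0: "G > 0" using G by simp
    show ?thesis
    proof (cases "I = \<infinity>")
      case True
      then show ?thesis using L Gp0 by (simp add: ennreal_mult_top)
    next
      case False
      define Ir where "Ir = enn2real I"
      have IIr: "I = ennreal Ir" using False by (simp add: Ir_def less_top)
      have Ir0: "Ir \<ge> 0" by (simp add: Ir_def)
      have vm: "(\<lambda>x. (if v x = \<infinity> then \<infinity> else ennreal (enn2real (v x) powr q))) \<in> borel_measurable lborel"
        using v by measurable
      have AEfin: "AE x in lborel. v x \<noteq> \<infinity>"
      proof -
        have "AE x in lborel. (if v x = \<infinity> then \<infinity> else ennreal (enn2real (v x) powr q)) \<noteq> \<infinity>"
          using nn_integral_PInf_AE[OF vm] False unfolding I_def by simp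
        then show ?thesis by eventually_elim (auto split: if_splits)
      qed
      have Ieq: "I = (\<integral>\<^sup>+ x. ennreal (enn2real (v x) powr q) \<partial>lborel)"
        unfolding I_def by (rule nn_integral_cong_AE) (use AEfin in auto)
      show ?thesis
      proof (cases "Ir = 0")
        case True
        then have "(\<integral>\<^sup>+ x. ennreal (enn2real (v x) powr q) \<partial>lborel) = 0"
          using Ieq IIr by simp
        then have "AE x in lborel. ennreal (enn2real (v x) powr q) = 0"
          by (subst (asm) nn_integral_0_iff_AE) (use v in auto)
        then have "AE y in lborel. ennreal (g y) * v y = 0"
          using AEfin by eventually_elim (auto simp: enn2real_eq_0_iff)
        then have "(\<integral>\<^sup>+y. ennreal (g y) * v y \<partial>lborel) = (\<integral>\<^sup>+y. 0 * v y \<partial>lborel)"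
          by (intro nn_integral_cong_AE) auto
        then show ?thesis by simp
      next
        case Irpos: False
        then have Ir0': "Ir > 0" using Ir0 by simp
        define A where "A = G powr (1/p)"
        define B where "B = Ir powr (1/q)"
        have A0: "A > 0" and B0: "B > 0" using Gp0 Ir0' by (auto simp: A_def B_def)
        have Ap: "A powr p = G" using Gp0 p1 by (simp add: A_def powr_powr)
        have Bq: "B powr q = Ir" using Ir0' q by (simp add: B_def powr_powr)
        define c1 where "c1 = A * B / (G * p)"
        define c2 where "c2 = A * B / (Ir * q)"
        have c1: "c1 \<ge> 0" and c2: "c2 \<ge> 0" using A0 B0 Gp0 Ir0' p1 q by (auto simp: c1_def c2_def)
        have pw: "g y * r \<le> c1 * g y powr p + c2 * r powr q" if "r \<ge> 0" for y r
        proof -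
          have "(g y / A) * (r / B) \<le> (g y / A) powr p / p + (r / B) powr q / q"
            by (rule Youngs_inequality) (use p1 q pq g that A0 B0 in auto)
          also have "\<dots> = g y powr p / (G * p) + r powr q / (Ir * q)"
            using g that A0 B0 by (simp add: powr_divide Ap Bq)
          finally have "(g y / A) * (r / B) * (A * B) \<le> (g y powr p / (G * p) + r powr q / (Ir * q)) * (A * B)"
            using A0 B0 by (intro mult_right_mono) auto
          then show ?thesis using A0 B0 by (simp add: c1_def c2_def field_simps)
        qed
        have "(\<integral>\<^sup>+y. ennreal (g y) * v y \<partial>lborel) = (\<integral>\<^sup>+y. ennreal (g y * enn2real (v y)) \<partial>lborel)"
          by (rule nn_integral_cong_AE) (use AEfin g in \<open>auto simp: ennreal_mult less_top\<close>)
        also have "\<dots> \<le> (\<integral>\<^sup>+y. ennreal c1 * ennreal (g y powr p) + ennreal c2 * ennreal (enn2real (v y) powr q) \<partial>lborel)"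
          by (intro nn_integral_mono) (use pw c1 c2 in \<open>auto simp flip: ennreal_mult ennreal_plus\<close>)
        also have "\<dots> = ennreal c1 * (\<integral>\<^sup>+y. ennreal (g y powr p) \<partial>lborel) + ennreal c2 * I"
          using g v by (simp add: nn_integral_add nn_integral_cmult Ieq)
        also have "\<dots> \<le> ennreal c1 * ennreal G + ennreal c2 * ennreal Ir"
          using Gp IIr by (intro add_mono mult_left_mono) auto
        also have "\<dots> = ennreal (c1 * G + c2 * Ir)"
          using c1 c2 Gp0 Ir0 by (simp add: ennreal_mult ennreal_plus)
        also have "c1 * G + c2 * Ir = A * B"
          using Gp0 Ir0' p1 q pq by (simp add: c1_def c2_def field_simps)
        also have "ennreal (A * B) = ennreal (G powr ((q-1)/q)) * Lq_norm_enn q v"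
          using L False A0 B0 by (simp add: A_def B_def ip Ir_def ennreal_mult)
        finally show ?thesis .
      qed
    qed
  qed
qed




lemma riesz_conv_lborel:
  "riesz_conv \<alpha> u x = (\<integral>\<^sup>+ y. ennreal (\<bar>u y\<bar> / norm (x - y) powr \<alpha>) \<partial>lborel)"
  unfolding riesz_conv_def by (simp add: nn_integral_completion)

lemma conv_bound:
  fixes u g :: "'a::euclidean_space \<Rightarrow> real" and w :: "'a \<Rightarrow> ennreal"
  assumes u: "u \<in> borel_measurable lborel" and g: "g \<in> borel_measurable lborel" "\<forall>y. g y \<ge> 0"
    and c: "c \<ge> 0"
    and wb: "\<And>x. w x \<le> ennreal c * (\<integral>\<^sup>+y. ennreal (g y / norm (x - y) powr \<alpha>) \<partial>lborel)"
  shows "(\<integral>\<^sup>+x. ennreal \<bar>u x\<bar> * w x \<partial>lborel) \<le> ennreal c * (\<integral>\<^sup>+y. ennreal (g y) * riesz_conv \<alpha> u y \<partial>lborel)"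
proof -
  define F where "F = (\<lambda>x y. ennreal (\<bar>u x\<bar> * g y / norm (x - y) powr \<alpha>))"
  have Fm: "case_prod F \<in> borel_measurable (lborel \<Otimes>\<^sub>M lborel)"
    unfolding F_def using u g by measurable
  have "(\<integral>\<^sup>+x. ennreal \<bar>u x\<bar> * w x \<partial>lborel) \<le> (\<integral>\<^sup>+x. ennreal \<bar>u x\<bar> * (ennreal c * (\<integral>\<^sup>+y. ennreal (g y / norm (x - y) powr \<alpha>) \<partial>lborel)) \<partial>lborel)"
    by (intro nn_integral_mono mult_left_mono wb) auto
  also have "\<dots> = (\<integral>\<^sup>+x. ennreal c * (\<integral>\<^sup>+y. F x y \<partial>lborel) \<partial>lborel)"
  proof (intro nn_integral_cong)
    fix x
    have "ennreal \<bar>u x\<bar> * (\<integral>\<^sup>+y. ennreal (g y / norm (x - y) powr \<alpha>) \<partial>lborel)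
        = (\<integral>\<^sup>+y. ennreal \<bar>u x\<bar> * ennreal (g y / norm (x - y) powr \<alpha>) \<partial>lborel)"
      by (rule nn_integral_cmult[symmetric]) (use g in measurable)
    also have "\<dots> = (\<integral>\<^sup>+y. F x y \<partial>lborel)"
      unfolding F_def by (intro nn_integral_cong) (use g in \<open>auto simp: ennreal_mult[symmetric]\<close>)
    finally show "ennreal \<bar>u x\<bar> * (ennreal c * (\<integral>\<^sup>+y. ennreal (g y / norm (x - y) powr \<alpha>) \<partial>lborel))
        = ennreal c * (\<integral>\<^sup>+y. F x y \<partial>lborel)"
      by (simp add: mult.left_commute)
  qed
  also have "\<dots> = ennreal c * (\<integral>\<^sup>+x. (\<integral>\<^sup>+y. F x y \<partial>lborel) \<partial>lborel)"
    by (rule nn_integral_cmult) (use Fm in measurable)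
  also have "(\<integral>\<^sup>+x. (\<integral>\<^sup>+y. F x y \<partial>lborel) \<partial>lborel) = (\<integral>\<^sup>+y. (\<integral>\<^sup>+x. F x y \<partial>lborel) \<partial>lborel)"
    by (rule pair_sigma_finite.Fubini'[symmetric]) (use Fm in \<open>auto simp: pair_sigma_finite_def lborel.sigma_finite_measure_axioms\<close>)
  also have "\<dots> = (\<integral>\<^sup>+y. ennreal (g y) * riesz_conv \<alpha> u y \<partial>lborel)"
  proof (intro nn_integral_cong)
    fix y
    have "ennreal (g y) * riesz_conv \<alpha> u y = (\<integral>\<^sup>+x. ennreal (g y) * ennreal (\<bar>u x\<bar> / norm (y - x) powr \<alpha>) \<partial>lborel)"
      unfolding riesz_conv_lborel by (rule nn_integral_cmult[symmetric]) (use u in measurable)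
    also have "\<dots> = (\<integral>\<^sup>+x. F x y \<partial>lborel)"
      unfolding F_def by (intro nn_integral_cong) (use g in \<open>auto simp: ennreal_mult[symmetric] norm_minus_commute\<close>)
    finally show "(\<integral>\<^sup>+x. F x y \<partial>lborel) = ennreal (g y) * riesz_conv \<alpha> u y" by simp
  qed
  finally show ?thesis .
qed




lemma shell_sum:
  fixes f :: "'a::euclidean_space \<Rightarrow> ennreal"
  assumes rho: "\<And>k. \<rho> k \<ge> 0" and c: "\<And>k. c k \<ge> 0"
    and fb: "\<And>y. f y \<le> (\<Sum>k. indicator (cball 0 (\<rho> k)) y * ennreal (c k))"
    and eq: "\<And>k. c k * unit_ball_vol DIM('a) * \<rho> k ^ DIM('a) = K * r ^ k"
    and r: "0 \<le> r" "r < 1" and K: "K \<ge> 0"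
  shows "(\<integral>\<^sup>+y. f y \<partial>lborel) \<le> ennreal (K / (1 - r))"
proof -
  have "(\<integral>\<^sup>+y. f y \<partial>lborel) \<le> (\<integral>\<^sup>+y. (\<Sum>k. indicator (cball (0::'a) (\<rho> k)) y * ennreal (c k)) \<partial>lborel)"
    by (intro nn_integral_mono fb)
  also have "\<dots> = (\<Sum>k. (\<integral>\<^sup>+y. indicator (cball (0::'a) (\<rho> k)) y * ennreal (c k) \<partial>lborel))"
  proof (rule nn_integral_suminf)
    fix k
    have [measurable]: "cball (0::'a) (\<rho> k) \<in> sets borel" by (simp add: borel_closed)
    show "(\<lambda>x. indicator (cball (0::'a) (\<rho> k)) x * ennreal (c k)) \<in> borel_measurable lborel"
      by measurable
  qed
  also have "\<dots> = (\<Sum>k. ennreal (K * r ^ k))"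
  proof (intro suminf_cong)
    fix k
    have "(\<integral>\<^sup>+y. indicator (cball (0::'a) (\<rho> k)) y * ennreal (c k) \<partial>lborel)
        = (\<integral>\<^sup>+y. ennreal (c k) * indicator (cball (0::'a) (\<rho> k)) y \<partial>lborel)"
      by (simp add: mult.commute)
    also have "\<dots> = ennreal (c k) * emeasure lborel (cball (0::'a) (\<rho> k))"
      by (rule nn_integral_cmult_indicator) simp
    also have "\<dots> = ennreal (K * r ^ k)"
      using rho[of k] c[of k] by (simp add: emeasure_cball ennreal_mult[symmetric] eq[symmetric] mult.assoc)
    finally show "(\<integral>\<^sup>+y. indicator (cball (0::'a) (\<rho> k)) y * ennreal (c k) \<partial>lborel) = ennreal (K * r ^ k)" .
  qed
  also have "\<dots> = ennreal (\<Sum>k. K * r ^ k)"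
    by (rule suminf_ennreal2) (use r K in \<open>auto intro: summable_mult summable_geometric\<close>)
  also have "(\<Sum>k. K * r ^ k) = K / (1 - r)"
    using r by (simp add: suminf_mult suminf_geometric summable_geometric)
  finally show ?thesis by simp
qed

lemma powr_min_bound:
  fixes a t b s :: real
  assumes "0 < a" "a \<le> t" "t \<le> b"
  shows "min (a powr s) (b powr s) \<le> t powr s"
proof (cases "s \<ge> 0")
  case True
  then have "a powr s \<le> t powr s" using assms by (intro powr_mono2) auto
  then show ?thesis by simp
next
  case False
  then have "b powr s \<le> t powr s" using assms by (intro powr_mono2') auto
  then show ?thesis by simp
qed

lemma powr_max_bound:
  fixes a t b s :: real
  assumes "0 < a" "a \<le> t" "t \<le> b"
  shows "t powr s \<le> max (a powr s) (b powr s)"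
proof (cases "s \<ge> 0")
  case True
  then have "t powr s \<le> b powr s" using assms by (intro powr_mono2) auto
  then show ?thesis by simp
next
  case False
  then have "t powr s \<le> a powr s" using assms by (intro powr_mono2') auto
  then show ?thesis by simp
qed

lemma ennreal_term_le_suminf: "(f k :: ennreal) \<le> (\<Sum>k. f k)"
  using sum_le_suminf[of f "{k}"] by (simp add: summableI)

lemma outer_shell:
  fixes s R :: real
  assumes s: "s > DIM('a::euclidean_space)" and R: "R > 0"
  shows "(\<integral>\<^sup>+y. ennreal (if y \<in> - ball (0::'a) R then norm y powr (-s) else 0) \<partial>lborel)
     \<le> ennreal (unit_ball_vol DIM('a) * 2 powr DIM('a) * R powr (DIM('a) - s) / (1 - 2 powr (DIM('a) - s)))"
proof -
  define d where "d = real DIM('a)"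
  define V where "V = unit_ball_vol d"
  have V: "V \<ge> 0" by (simp add: V_def d_def)
  define \<rho> where "\<rho> k = R * 2 powr (real k + 1)" for k :: nat
  define c where "c k = (R * 2 powr real k) powr (-s)" for k :: nat
  have "(\<integral>\<^sup>+y. ennreal (if y \<in> - ball (0::'a) R then norm y powr (-s) else 0) \<partial>lborel)
     \<le> ennreal (V * 2 powr d * R powr (d - s) / (1 - 2 powr (d - s)))"
  proof (rule shell_sum[where \<rho> = \<rho> and c = c and r = "2 powr (d - s)"])
    show "\<rho> k \<ge> 0" for k using R by (simp add: \<rho>_def)
    show "c k \<ge> 0" for k by (simp add: c_def)
    show "0 \<le> 2 powr (d - s)" by simp
    show "2 powr (d - s) < 1" using powr_less_mono[of "d - s" 0 2] s by (simp add: d_def)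
    show "V * 2 powr d * R powr (d - s) \<ge> 0" using V by simp
    show "c k * unit_ball_vol DIM('a) * \<rho> k ^ DIM('a) = V * 2 powr d * R powr (d - s) * (2 powr (d - s)) ^ k" for k
    proof -
      have "\<rho> k ^ DIM('a) = \<rho> k powr d" using R by (simp add: \<rho>_def d_def powr_realpow)
      moreover have "(2 powr (d - s)) ^ k = 2 powr ((d - s) * real k)"
        by (simp add: powr_realpow[symmetric] powr_powr)
      ultimately show ?thesis
        using R by (simp add: c_def \<rho>_def V_def d_def powr_mult powr_powr powr_add powr_diff
            powr_minus field_simps)
    qed
    show "ennreal (if y \<in> - ball (0::'a) R then norm y powr (-s) else 0)
        \<le> (\<Sum>k. indicator (cball 0 (\<rho> k)) y * ennreal (c k))" for y
    proof (cases "y \<in> ball 0 R")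
      case True
      then show ?thesis by simp
    next
      case False
      then have yR: "norm y \<ge> R" by simp
      define t where "t = norm y / R"
      have t1: "t \<ge> 1" using yR R by (simp add: t_def)
      define k where "k = nat \<lfloor>log 2 t\<rfloor>"
      have lg: "log 2 t \<ge> 0" using t1 by simp
      have k1: "real k \<le> log 2 t" using lg by (simp add: k_def)
      have k2: "log 2 t < real k + 1" using lg by (simp add: k_def)
      have "2 powr real k \<le> 2 powr (log 2 t)" using k1 by simp
      then have tk1: "2 powr real k \<le> t" using t1 by simp
      have "2 powr (log 2 t) \<le> 2 powr (real k + 1)" using k2 by simp
      then have tk2: "t \<le> 2 powr (real k + 1)" using t1 by simp
      have ny: "norm y = R * t" using R by (simp add: t_def)
      have inb: "y \<in> cball 0 (\<rho> k)" using tk2 R by (simp add: \<rho>_def ny)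
      have "norm y powr (-s) \<le> c k"
        unfolding c_def ny using tk1 R s
        by (intro powr_mono2') (auto simp: d_def)
      then have "ennreal (if y \<in> - ball (0::'a) R then norm y powr (-s) else 0)
          \<le> indicator (cball 0 (\<rho> k)) y * ennreal (c k)"
        using inb False by (simp add: ennreal_leI)
      also have "\<dots> \<le> (\<Sum>k. indicator (cball 0 (\<rho> k)) y * ennreal (c k))"
        by (rule ennreal_term_le_suminf)
      finally show ?thesis .
    qed
  qed
  then show ?thesis by (simp add: d_def V_def)
qed

lemma inner_shell:
  fixes s R :: real
  assumes s: "s < DIM('a::euclidean_space)" and R: "R > 0"
  shows "(\<integral>\<^sup>+y. ennreal (if y \<in> ball (0::'a) R then norm y powr (-s) else 0) \<partial>lborel)
     \<le> ennreal (unit_ball_vol DIM('a) * 2 powr \<bar>s\<bar> * R powr (DIM('a) - s) / (1 - 2 powr (s - DIM('a))))"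
proof -
  define d where "d = real DIM('a)"
  define V where "V = unit_ball_vol d"
  have V: "V \<ge> 0" by (simp add: V_def d_def)
  define \<rho> where "\<rho> k = R * 2 powr (- real k)" for k :: nat
  define c where "c k = (R * 2 powr (- real k)) powr (-s) * 2 powr \<bar>s\<bar>" for k :: nat
  have "(\<integral>\<^sup>+y. ennreal (if y \<in> ball (0::'a) R then norm y powr (-s) else 0) \<partial>lborel)
     \<le> ennreal (V * 2 powr \<bar>s\<bar> * R powr (d - s) / (1 - 2 powr (s - d)))"
  proof (rule shell_sum[where \<rho> = \<rho> and c = c and r = "2 powr (s - d)"])
    show "\<rho> k \<ge> 0" for k using R by (simp add: \<rho>_def)
    show "c k \<ge> 0" for k by (simp add: c_def)
    show "0 \<le> 2 powr (s - d)" by simp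
    show "2 powr (s - d) < 1" using powr_less_mono[of "s - d" 0 2] s by (simp add: d_def)
    show "V * 2 powr \<bar>s\<bar> * R powr (d - s) \<ge> 0" using V by simp
    show "c k * unit_ball_vol DIM('a) * \<rho> k ^ DIM('a) = V * 2 powr \<bar>s\<bar> * R powr (d - s) * (2 powr (s - d)) ^ k" for k
    proof -
      have "\<rho> k ^ DIM('a) = \<rho> k powr d" using R by (simp add: \<rho>_def d_def powr_realpow)
      moreover have "(2 powr (s - d)) ^ k = 2 powr ((s - d) * real k)"
        by (simp add: powr_realpow[symmetric] powr_powr)
      moreover have "(R * 2 powr (- real k)) powr (-s) * (R * 2 powr (- real k)) powr d
          = (R * 2 powr (- real k)) powr (d - s)"
        by (simp add: powr_add[symmetric])
      moreover have "(R * 2 powr (- real k)) powr (d - s) = R powr (d - s) * 2 powr ((s - d) * real k)"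
        using R by (simp add: powr_mult powr_powr algebra_simps)
      ultimately show ?thesis
        by (simp add: c_def \<rho>_def V_def d_def)
    qed
    show "ennreal (if y \<in> ball (0::'a) R then norm y powr (-s) else 0)
        \<le> (\<Sum>k. indicator (cball 0 (\<rho> k)) y * ennreal (c k))" for y
    proof (cases "y \<in> ball 0 R \<and> y \<noteq> 0")
      case False
      then show ?thesis by auto
    next
      case True
      then have yR: "norm y < R" "norm y > 0" by auto
      define t where "t = norm y / R"
      have t1: "t < 1" "t > 0" using yR R by (auto simp: t_def)
      define k where "k = nat \<lfloor>- log 2 t\<rfloor>"
      have lg: "- log 2 t \<ge> 0" using t1 by simp
      have k1: "real k \<le> - log 2 t" using lg by (simp add: k_def)
      have k2: "- log 2 t < real k + 1" using lg by (simp add: k_def)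
      have "2 powr (log 2 t) \<le> 2 powr (- real k)" using k1 by simp
      then have tk1: "t \<le> 2 powr (- real k)" using t1 by simp
      have "2 powr (- real k - 1) \<le> 2 powr (log 2 t)" using k2 by simp
      then have tk2: "2 powr (- real k - 1) \<le> t" using t1 by simp
      have ny: "norm y = R * t" using R by (simp add: t_def)
      have inb: "y \<in> cball 0 (\<rho> k)" using tk1 R by (simp add: \<rho>_def ny)
      have "norm y powr (-s) \<le> max ((R * 2 powr (- real k - 1)) powr (-s)) ((R * 2 powr (- real k)) powr (-s))"
        unfolding ny using tk1 tk2 R by (intro powr_max_bound) auto
      also have "\<dots> \<le> c k"
      proof -
        have e: "(R * 2 powr (- real k - 1)) powr (-s) = (R * 2 powr (- real k)) powr (-s) * 2 powr s"
        proof -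
          have h: "R * 2 powr (- real k - 1) = (R * 2 powr (- real k)) * (1/2)" by (simp add: powr_diff)
          have "(1/2::real) powr (-s) = 2 powr s" by (simp add: powr_divide powr_minus)
          then show ?thesis unfolding h using R by (subst powr_mult) auto
        qed
        have "2 powr s \<le> 2 powr \<bar>s\<bar>" by simp
        moreover have "(1::real) \<le> 2 powr \<bar>s\<bar>" using ge_one_powr_ge_zero[of 2 "\<bar>s\<bar>"] by simp
        ultimately have "(R * 2 powr (- real k)) powr (-s) * 2 powr s \<le> c k"
            "(R * 2 powr (- real k)) powr (-s) * 1 \<le> c k"
          unfolding c_def by (auto intro!: mult_left_mono simp del: mult_1_right)
        then show ?thesis unfolding e by simp
      qed
      finally have "ennreal (if y \<in> ball (0::'a) R then norm y powr (-s) else 0)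
          \<le> indicator (cball 0 (\<rho> k)) y * ennreal (c k)"
        using inb True by (simp add: ennreal_leI)
      also have "\<dots> \<le> (\<Sum>k. indicator (cball 0 (\<rho> k)) y * ennreal (c k))"
        by (rule ennreal_term_le_suminf)
      finally show ?thesis .
    qed
  qed
  then show ?thesis by (simp add: d_def V_def)
qed




lemma pointwise_lower:
  fixes g :: "'a::euclidean_space \<Rightarrow> real" and x c :: 'a and \<beta> \<alpha> :: real
  assumes \<alpha>: "\<alpha> > 0" and r: "r > 0" and a: "a > 0" and D: "D > 0" and m: "m \<ge> 0"
    and g: "\<And>y. g y \<ge> 0"
    and gb: "\<And>y. y \<in> ball c (a*r) \<Longrightarrow> g y \<ge> m * r powr (-\<beta>)"
    and nb: "\<And>y. y \<in> ball c (a*r) \<Longrightarrow> 0 < norm (x - y) \<and> norm (x - y) \<le> D * r"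
  shows "ennreal (m * D powr (-\<alpha>) * unit_ball_vol DIM('a) * a ^ DIM('a) * r powr (DIM('a) - \<beta> - \<alpha>))
     \<le> (\<integral>\<^sup>+y. ennreal (g y / norm (x - y) powr \<alpha>) \<partial>lborel)"
proof -
  define L where "L = m * D powr (-\<alpha>) * r powr (-\<beta> - \<alpha>)"
  have L0: "L \<ge> 0" using m by (simp add: L_def)
  have pt: "L \<le> g y / norm (x - y) powr \<alpha>" if y: "y \<in> ball c (a*r)" for y
  proof -
    have "m * r powr (-\<beta>) / (D * r) powr \<alpha> \<le> g y / norm (x - y) powr \<alpha>"
      using nb[OF y] gb[OF y] g[of y] \<alpha> D r m by (intro frac_le powr_mono2) auto
    also have "m * r powr (-\<beta>) / (D * r) powr \<alpha> = L"
      using D r by (simp add: L_def powr_mult powr_minus powr_diff powr_add divide_simps)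
    finally show ?thesis .
  qed
  have "(\<integral>\<^sup>+y. ennreal L * indicator (ball c (a*r)) y \<partial>lborel) \<le> (\<integral>\<^sup>+y. ennreal (g y / norm (x - y) powr \<alpha>) \<partial>lborel)"
    by (intro nn_integral_mono) (auto simp: indicator_def intro!: ennreal_leI pt)
  moreover have "(\<integral>\<^sup>+y. ennreal L * indicator (ball c (a*r)) y \<partial>lborel) = ennreal L * emeasure lborel (ball c (a*r))"
    by (rule nn_integral_cmult_indicator) simp
  moreover have "ennreal L * emeasure lborel (ball c (a*r)) =
      ennreal (m * D powr (-\<alpha>) * unit_ball_vol DIM('a) * a ^ DIM('a) * r powr (DIM('a) - \<beta> - \<alpha>))"
  proof -
    have "(a * r) ^ DIM('a) = a ^ DIM('a) * r powr DIM('a)" using r by (simp add: power_mult_distrib powr_realpow)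
    moreover have "r powr (-\<beta> - \<alpha>) * r powr DIM('a) = r powr (DIM('a) - \<beta> - \<alpha>)"
      by (simp add: powr_add[symmetric] algebra_simps)
    ultimately show ?thesis using L0 a r
      by (simp add: emeasure_ball ennreal_mult[symmetric] L_def algebra_simps)
  qed
  ultimately show ?thesis by simp
qed




lemma combine:
  fixes u g :: "'a::euclidean_space \<Rightarrow> real" and w :: "'a \<Rightarrow> ennreal"
  assumes q: "q > 1" and K: "K > 0" and M: "M \<ge> 0" and Rf: "Rf \<ge> 0"
    and u: "u \<in> borel_measurable lborel"
    and g: "g \<in> borel_measurable lborel" "\<forall>y. g y \<ge> 0"
    and wb: "\<And>x. w x \<le> ennreal (1/K) * (\<integral>\<^sup>+y. ennreal (g y / norm (x - y) powr \<alpha>) \<partial>lborel)"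
    and Gb: "(\<integral>\<^sup>+y. ennreal (g y powr (q/(q-1))) \<partial>lborel) \<le> ennreal (M * Rf)"
  shows "(\<integral>\<^sup>+x. ennreal \<bar>u x\<bar> * w x \<partial>lborel)
     \<le> ennreal (1/K * M powr ((q-1)/q) * Rf powr ((q-1)/q)) * Lq_norm_enn q (riesz_conv \<alpha> u)"
proof -
  have "(\<integral>\<^sup>+x. ennreal \<bar>u x\<bar> * w x \<partial>lborel) \<le> ennreal (1/K) * (\<integral>\<^sup>+y. ennreal (g y) * riesz_conv \<alpha> u y \<partial>lborel)"
    by (rule conv_bound) (use u g K wb in auto)
  also have "\<dots> \<le> ennreal (1/K) * (ennreal ((M * Rf) powr ((q-1)/q)) * Lq_norm_enn q (riesz_conv \<alpha> u))"
  proof (intro mult_left_mono holder_enn)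
    show "riesz_conv \<alpha> u \<in> borel_measurable lborel"
      unfolding riesz_conv_lborel[abs_def] using u by measurable
  qed (use q g Gb M Rf in auto)
  also have "\<dots> = ennreal (1/K * M powr ((q-1)/q) * Rf powr ((q-1)/q)) * Lq_norm_enn q (riesz_conv \<alpha> u)"
  proof -
    define e where "e = (q-1)/q"
    have e1: "ennreal (1/K * M powr e * Rf powr e) = ennreal (1/K * M powr e) * ennreal (Rf powr e)"
      by (rule ennreal_mult) (use K in auto)
    have e2: "ennreal (1/K * M powr e) = ennreal (1/K) * ennreal (M powr e)"
      by (rule ennreal_mult) (use K in auto)
    show ?thesis unfolding e_def[symmetric] e1 e2 using M Rf by (simp add: powr_mult ennreal_mult mult.assoc)
  qed
  finally show ?thesis .
qed




lemma case1:
  fixes q \<alpha> \<delta> :: real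
  assumes q: "q > 1" and a: "real DIM('a::euclidean_space) / q < \<alpha>" and dl: "\<delta> > 0"
  shows "\<exists>C>0. \<forall>R>0. \<forall>u :: 'a \<Rightarrow> real. u \<in> borel_measurable lborel \<longrightarrow>
     (\<integral>\<^sup>+x. ennreal \<bar>u x\<bar> * ennreal (if x \<in> - ball 0 R then 1 / norm x powr (\<alpha> - real DIM('a) / q + \<delta>) else 0) \<partial>lborel)
       \<le> ennreal (C * R powr (-\<delta>)) * Lq_norm_enn q (riesz_conv \<alpha> u)"
proof -
  define d where "d = real DIM('a)"
  define p where "p = q / (q - 1)"
  define \<beta> where "\<beta> = d - d/q + \<delta>"
  define V where "V = unit_ball_vol d"
  have d1: "d \<ge> 1" by (simp add: d_def DIM_positive)
  have dq: "d / q > 0" using d1 q by simp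
  have \<alpha>0: "\<alpha> > 0" using a dq unfolding d_def by linarith
  have "d / q \<le> d" using d1 q by (simp add: divide_le_eq)
  then have \<beta>0: "\<beta> > 0" using dl by (simp add: \<beta>_def)
  have \<beta>p: "\<beta> * p = d + \<delta> * p" using q by (simp add: \<beta>_def p_def field_simps)
  have p0: "p > 0" using q by (simp add: p_def)
  have V0: "V > 0" by (simp add: V_def d_def)
  define m where "m = min ((3/2) powr (-\<beta>)) ((5/2::real) powr (-\<beta>))"
  have m0: "m > 0" by (simp add: m_def)
  define K where "K = m * (3/2) powr (-\<alpha>) * V * (1/2) ^ DIM('a)"
  have K0: "K > 0" using m0 V0 by (simp add: K_def)
  define M where "M = V * 2 powr d / (1 - 2 powr (d - \<beta> * p))"
  have "2 powr (d - \<beta> * p) < 1" using powr_less_mono[of "d - \<beta> * p" 0 2] \<beta>p dl p0 by simp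
  then have M0: "M > 0" using V0 by (simp add: M_def)
  define C where "C = 1/K * M powr ((q-1)/q)"
  have C0: "C > 0" using K0 M0 by (simp add: C_def)
  show ?thesis
  proof (intro exI[of _ C] conjI allI impI C0)
    fix R :: real and u :: "'a \<Rightarrow> real"
    assume R: "R > 0" and u: "u \<in> borel_measurable lborel"
    define g where "g y = (if y \<in> - ball (0::'a) R then norm y powr (-\<beta>) else 0)" for y
    have [measurable]: "ball (0::'a) R \<in> sets borel" by simp
    have gm: "g \<in> borel_measurable lborel" unfolding g_def by measurable
    have g0: "\<forall>y. g y \<ge> 0" by (simp add: g_def)
    have gp: "g y powr (q/(q-1)) = (if y \<in> - ball (0::'a) R then norm y powr (-(\<beta> * p)) else 0)" for y
      using R by (auto simp: g_def powr_powr p_def)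
    have "(\<integral>\<^sup>+y. ennreal (g y powr (q/(q-1))) \<partial>lborel) \<le> ennreal (M * R powr (d - \<beta> * p))"
      unfolding gp using outer_shell[where 'a='a, of "\<beta> * p" R] \<beta>p dl p0 R
      by (simp add: M_def d_def V_def mult_ac)
    note Gb = this
    have "(\<integral>\<^sup>+x. ennreal \<bar>u x\<bar> * ennreal (if x \<in> - ball 0 R then 1 / norm x powr (\<alpha> - real DIM('a) / q + \<delta>) else 0) \<partial>lborel)
     \<le> ennreal (1/K * M powr ((q-1)/q) * (R powr (d - \<beta> * p)) powr ((q-1)/q)) * Lq_norm_enn q (riesz_conv \<alpha> u)"
    proof (rule combine[OF q K0 _ _ u gm g0 _ Gb])
      show "M \<ge> 0" using M0 by simp
      show "R powr (d - \<beta> * p) \<ge> 0" by simp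
      fix x :: 'a
      show "ennreal (if x \<in> - ball 0 R then 1 / norm x powr (\<alpha> - real DIM('a) / q + \<delta>) else 0)
          \<le> ennreal (1 / K) * (\<integral>\<^sup>+y. ennreal (g y / norm (x - y) powr \<alpha>) \<partial>lborel)"
      proof (cases "x \<in> ball 0 R")
        case True then show ?thesis by simp
      next
        case False
        define r where "r = norm x"
        have rR: "r \<ge> R" using False by (simp add: r_def)
        then have r0: "r > 0" using R by simp
        have lb: "ennreal (m * (3/2) powr (-\<alpha>) * unit_ball_vol DIM('a) * (1/2) ^ DIM('a) * r powr (DIM('a) - \<beta> - \<alpha>))
           \<le> (\<integral>\<^sup>+y. ennreal (g y / norm (x - y) powr \<alpha>) \<partial>lborel)"
        proof (rule pointwise_lower[OF \<alpha>0 r0])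
          fix y assume y: "y \<in> ball (2 *\<^sub>R x) (1/2 * r)"
          have n2: "norm (2 *\<^sub>R x) = 2 * r" by (simp add: r_def)
          have dy: "norm (2 *\<^sub>R x - y) < r / 2" using y by (simp add: dist_norm)
          have "norm (2 *\<^sub>R x) - norm y \<le> norm (2 *\<^sub>R x - y)" by (rule norm_triangle_ineq2)
          moreover have "norm y - norm (2 *\<^sub>R x) \<le> norm (y - 2 *\<^sub>R x)" by (rule norm_triangle_ineq2)
          moreover have "norm (y - 2 *\<^sub>R x) = norm (2 *\<^sub>R x - y)" by (rule norm_minus_commute)
          ultimately have ny: "3/2 * r < norm y" "norm y < 5/2 * r" using dy n2 by auto
          have xy: "x - y = (2 *\<^sub>R x - y) - x" by (simp add: algebra_simps scaleR_2)
          have "\<bar>norm (2 *\<^sub>R x - y) - norm x\<bar> \<le> norm (x - y)"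
            using norm_triangle_ineq3[of "2 *\<^sub>R x - y" x] unfolding xy[symmetric] .
          moreover have "norm (x - y) \<le> norm (2 *\<^sub>R x - y) + norm x"
            unfolding xy by (rule norm_triangle_ineq4)
          ultimately show "0 < norm (x - y) \<and> norm (x - y) \<le> 3/2 * r"
            using dy by (auto simp: r_def)
          show "g y \<ge> m * r powr (-\<beta>)"
          proof -
            have yb: "y \<in> - ball 0 R" using ny rR by auto
            have "m \<le> (norm y / r) powr (-\<beta>)"
              unfolding m_def using ny r0 by (intro powr_min_bound) (auto simp: field_simps)
            then have "m * r powr (-\<beta>) \<le> (norm y / r) powr (-\<beta>) * r powr (-\<beta>)"
              by (intro mult_right_mono) auto
            also have "\<dots> = norm y powr (-\<beta>)"
              using r0 by (simp add: powr_divide[symmetric] powr_mult[symmetric])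
            finally show ?thesis using yb by (simp add: g_def)
          qed
        qed (use m0 g0 in auto)
        have ex: "d - \<beta> - \<alpha> = - (\<alpha> - real DIM('a) / q + \<delta>)" by (simp add: \<beta>_def d_def)
        have "ennreal (if x \<in> - ball 0 R then 1 / norm x powr (\<alpha> - real DIM('a) / q + \<delta>) else 0)
            = ennreal (1/K) * ennreal (K * r powr (d - \<beta> - \<alpha>))"
        proof -
          have inv: "r powr (d - \<beta> - \<alpha>) = 1 / norm x powr (\<alpha> - real DIM('a) / q + \<delta>)"
            unfolding ex powr_minus_divide r_def ..
          have "ennreal (1/K) * ennreal (K * r powr (d - \<beta> - \<alpha>)) = ennreal (1/K * (K * r powr (d - \<beta> - \<alpha>)))"
            using K0 by (intro ennreal_mult[symmetric]) auto
          also have "1/K * (K * r powr (d - \<beta> - \<alpha>)) = r powr (d - \<beta> - \<alpha>)" using K0 by simp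
          finally show ?thesis using False inv by simp
        qed
        also have "\<dots> \<le> ennreal (1 / K) * (\<integral>\<^sup>+y. ennreal (g y / norm (x - y) powr \<alpha>) \<partial>lborel)"
          using lb by (intro mult_left_mono) (simp_all add: K_def V_def d_def mult_ac)
        finally show ?thesis .
      qed
    qed
    also have "(R powr (d - \<beta> * p)) powr ((q-1)/q) = R powr (-\<delta>)"
    proof -
      have "(d - \<beta> * p) * ((q-1)/q) = -\<delta>" using q unfolding \<beta>p by (simp add: p_def field_simps)
      then show ?thesis by (simp add: powr_powr)
    qed
    finally show "(\<integral>\<^sup>+x. ennreal \<bar>u x\<bar> * ennreal (if x \<in> - ball 0 R then 1 / norm x powr (\<alpha> - real DIM('a) / q + \<delta>) else 0) \<partial>lborel)
       \<le> ennreal (C * R powr (-\<delta>)) * Lq_norm_enn q (riesz_conv \<alpha> u)"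
      by (simp add: C_def)
  qed
qed




lemma case2:
  fixes q \<alpha> \<delta> :: real
  assumes q: "q > 1" and a: "real DIM('a::euclidean_space) / q < \<alpha>" and dl: "\<delta> > 0"
  shows "\<exists>C>0. \<forall>R>0. \<forall>u :: 'a \<Rightarrow> real. u \<in> borel_measurable lborel \<longrightarrow>
     (\<integral>\<^sup>+x. ennreal \<bar>u x\<bar> * ennreal (if x \<in> ball 0 R then 1 / norm x powr (\<alpha> - real DIM('a) / q - \<delta>) else 0) \<partial>lborel)
       \<le> ennreal (C * R powr \<delta>) * Lq_norm_enn q (riesz_conv \<alpha> u)"
proof -
  define d where "d = real DIM('a)"
  define p where "p = q / (q - 1)"
  define \<beta> where "\<beta> = d - d/q - \<delta>"
  define V where "V = unit_ball_vol d"
  have d1: "d \<ge> 1" by (simp add: d_def DIM_positive)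
  have dq: "d / q > 0" using d1 q by simp
  have \<alpha>0: "\<alpha> > 0" using a dq unfolding d_def by linarith
  have \<beta>p: "\<beta> * p = d - \<delta> * p" using q by (simp add: \<beta>_def p_def field_simps)
  have p0: "p > 0" using q by (simp add: p_def)
  have V0: "V > 0" by (simp add: V_def d_def)
  define m where "m = min ((1/4) powr (-\<beta>)) ((3/4::real) powr (-\<beta>))"
  have m0: "m > 0" by (simp add: m_def)
  define K where "K = m * (3/4) powr (-\<alpha>) * V * (1/4) ^ DIM('a)"
  have K0: "K > 0" using m0 V0 by (simp add: K_def)
  define M where "M = V * 2 powr \<bar>\<beta> * p\<bar> / (1 - 2 powr (\<beta> * p - d))"
  have "2 powr (\<beta> * p - d) < 1" using powr_less_mono[of "\<beta> * p - d" 0 2] \<beta>p dl p0 by simp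
  then have M0: "M > 0" using V0 by (simp add: M_def)
  define C where "C = 1/K * M powr ((q-1)/q)"
  have C0: "C > 0" using K0 M0 by (simp add: C_def)
  show ?thesis
  proof (intro exI[of _ C] conjI allI impI C0)
    fix R :: real and u :: "'a \<Rightarrow> real"
    assume R: "R > 0" and u: "u \<in> borel_measurable lborel"
    define g where "g y = (if y \<in> ball (0::'a) R then norm y powr (-\<beta>) else 0)" for y
    have [measurable]: "ball (0::'a) R \<in> sets borel" by simp
    have gm: "g \<in> borel_measurable lborel" unfolding g_def by measurable
    have g0: "\<forall>y. g y \<ge> 0" by (simp add: g_def)
    have gp: "g y powr (q/(q-1)) = (if y \<in> ball (0::'a) R then norm y powr (-(\<beta> * p)) else 0)" for y
      using R by (auto simp: g_def powr_powr p_def)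
    have "(\<integral>\<^sup>+y. ennreal (g y powr (q/(q-1))) \<partial>lborel) \<le> ennreal (M * R powr (d - \<beta> * p))"
      unfolding gp using inner_shell[where 'a='a, of "\<beta> * p" R] \<beta>p dl p0 R
      by (simp add: M_def d_def V_def mult_ac)
    note Gb = this
    have "(\<integral>\<^sup>+x. ennreal \<bar>u x\<bar> * ennreal (if x \<in> ball 0 R then 1 / norm x powr (\<alpha> - real DIM('a) / q - \<delta>) else 0) \<partial>lborel)
     \<le> ennreal (1/K * M powr ((q-1)/q) * (R powr (d - \<beta> * p)) powr ((q-1)/q)) * Lq_norm_enn q (riesz_conv \<alpha> u)"
    proof (rule combine[OF q K0 _ _ u gm g0 _ Gb])
      show "M \<ge> 0" using M0 by simp
      show "R powr (d - \<beta> * p) \<ge> 0" by simp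
      fix x :: 'a
      show "ennreal (if x \<in> ball 0 R then 1 / norm x powr (\<alpha> - real DIM('a) / q - \<delta>) else 0)
          \<le> ennreal (1 / K) * (\<integral>\<^sup>+y. ennreal (g y / norm (x - y) powr \<alpha>) \<partial>lborel)"
      proof (cases "x \<in> ball 0 R \<and> x \<noteq> 0")
        case False then show ?thesis by auto
      next
        case True
        define r where "r = norm x"
        have rR: "r < R" using True by (simp add: r_def)
        have r0: "r > 0" using True by (simp add: r_def)
        define c where "c = (1/2) *\<^sub>R x"
        have xc: "x = c + c" by (simp add: c_def flip: scaleR_add_left)
        have nc: "norm c = r / 2" by (simp add: c_def r_def)
        have lb: "ennreal (m * (3/4) powr (-\<alpha>) * unit_ball_vol DIM('a) * (1/4) ^ DIM('a) * r powr (DIM('a) - \<beta> - \<alpha>))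
           \<le> (\<integral>\<^sup>+y. ennreal (g y / norm (x - y) powr \<alpha>) \<partial>lborel)"
        proof (rule pointwise_lower[OF \<alpha>0 r0])
          fix y assume y: "y \<in> ball c (1/4 * r)"
          have dy: "norm (c - y) < r / 4" using y by (simp add: dist_norm)
          have "norm c - norm y \<le> norm (c - y)" by (rule norm_triangle_ineq2)
          moreover have "norm y - norm c \<le> norm (y - c)" by (rule norm_triangle_ineq2)
          moreover have "norm (y - c) = norm (c - y)" by (rule norm_minus_commute)
          ultimately have ny: "1/4 * r < norm y" "norm y < 3/4 * r" using dy nc by auto
          have xy: "x - y = (c - y) + c" using xc by (simp add: algebra_simps)
          have "norm c - norm (c - y) \<le> norm (x - y)"
            using norm_diff_ineq[of c "c - y"] unfolding xy by (simp add: add.commute)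
          moreover have "norm (x - y) \<le> norm (c - y) + norm c"
            unfolding xy by (rule norm_triangle_ineq)
          ultimately show "0 < norm (x - y) \<and> norm (x - y) \<le> 3/4 * r"
            using dy nc r0 norm_ge_zero[of "c - y"] by linarith
          show "g y \<ge> m * r powr (-\<beta>)"
          proof -
            have yb: "y \<in> ball 0 R" using ny rR by auto
            have "m \<le> (norm y / r) powr (-\<beta>)"
              unfolding m_def using ny r0 by (intro powr_min_bound) (auto simp: field_simps)
            then have "m * r powr (-\<beta>) \<le> (norm y / r) powr (-\<beta>) * r powr (-\<beta>)"
              by (intro mult_right_mono) auto
            also have "\<dots> = norm y powr (-\<beta>)"
              using r0 by (simp add: powr_divide[symmetric] powr_mult[symmetric])
            finally show ?thesis using yb by (simp add: g_def)
          qed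
        qed (use m0 g0 in auto)
        have ex: "d - \<beta> - \<alpha> = - (\<alpha> - real DIM('a) / q - \<delta>)" by (simp add: \<beta>_def d_def)
        have "ennreal (if x \<in> ball 0 R then 1 / norm x powr (\<alpha> - real DIM('a) / q - \<delta>) else 0)
            = ennreal (1/K) * ennreal (K * r powr (d - \<beta> - \<alpha>))"
        proof -
          have inv: "r powr (d - \<beta> - \<alpha>) = 1 / norm x powr (\<alpha> - real DIM('a) / q - \<delta>)"
            unfolding ex powr_minus_divide r_def ..
          have "ennreal (1/K) * ennreal (K * r powr (d - \<beta> - \<alpha>)) = ennreal (1/K * (K * r powr (d - \<beta> - \<alpha>)))"
            using K0 by (intro ennreal_mult[symmetric]) auto
          also have "1/K * (K * r powr (d - \<beta> - \<alpha>)) = r powr (d - \<beta> - \<alpha>)" using K0 by simp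
          finally show ?thesis using True inv by simp
        qed
        also have "\<dots> \<le> ennreal (1 / K) * (\<integral>\<^sup>+y. ennreal (g y / norm (x - y) powr \<alpha>) \<partial>lborel)"
          using lb by (intro mult_left_mono) (simp_all add: K_def V_def d_def mult_ac)
        finally show ?thesis .
      qed
    qed
    also have "(R powr (d - \<beta> * p)) powr ((q-1)/q) = R powr \<delta>"
    proof -
      have "(d - \<beta> * p) * ((q-1)/q) = \<delta>" using q unfolding \<beta>p by (simp add: p_def field_simps)
      then show ?thesis by (simp add: powr_powr)
    qed
    finally show "(\<integral>\<^sup>+x. ennreal \<bar>u x\<bar> * ennreal (if x \<in> ball 0 R then 1 / norm x powr (\<alpha> - real DIM('a) / q - \<delta>) else 0) \<partial>lborel)
       \<le> ennreal (C * R powr \<delta>) * Lq_norm_enn q (riesz_conv \<alpha> u)"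
      by (simp add: C_def)
  qed
qed




theorem proposition2p2:
  fixes q \<alpha> \<delta> :: real
  assumes "q > 1" and "real DIM('a::euclidean_space) / q < \<alpha>" and "\<alpha> < real DIM('a)"
    and "\<delta> > 0"
  shows "\<exists>C>0. \<forall>R>0. \<forall>u :: 'a \<Rightarrow> real. u \<in> borel_measurable lebesgue \<longrightarrow>
     (\<integral>\<^sup>+ x\<in>- ball 0 R. ennreal (\<bar>u x\<bar> / norm x powr (\<alpha> - real DIM('a) / q + \<delta>)) \<partial>lebesgue)
        \<le> ennreal (C / R powr \<delta>) * Lq_norm_enn q (riesz_conv \<alpha> u)
   \<and> (\<integral>\<^sup>+ x\<in>ball 0 R. ennreal (\<bar>u x\<bar> / norm x powr (\<alpha> - real DIM('a) / q - \<delta>)) \<partial>lebesgue)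
        \<le> ennreal (C * R powr \<delta>) * Lq_norm_enn q (riesz_conv \<alpha> u)"
proof -
  obtain C1 where C1: "C1 > 0" and H1: "\<forall>R>0. \<forall>u :: 'a \<Rightarrow> real. u \<in> borel_measurable lborel \<longrightarrow>
     (\<integral>\<^sup>+x. ennreal \<bar>u x\<bar> * ennreal (if x \<in> - ball 0 R then 1 / norm x powr (\<alpha> - real DIM('a) / q + \<delta>) else 0) \<partial>lborel)
       \<le> ennreal (C1 * R powr (-\<delta>)) * Lq_norm_enn q (riesz_conv \<alpha> u)"
    using case1[OF assms(1,2,4)] by blast
  obtain C2 where C2: "C2 > 0" and H2: "\<forall>R>0. \<forall>u :: 'a \<Rightarrow> real. u \<in> borel_measurable lborel \<longrightarrow>
     (\<integral>\<^sup>+x. ennreal \<bar>u x\<bar> * ennreal (if x \<in> ball 0 R then 1 / norm x powr (\<alpha> - real DIM('a) / q - \<delta>) else 0) \<partial>lborel)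
       \<le> ennreal (C2 * R powr \<delta>) * Lq_norm_enn q (riesz_conv \<alpha> u)"
    using case2[OF assms(1,2,4)] by blast
  define C where "C = max C1 C2"
  have C0: "C > 0" using C1 by (simp add: C_def)
  show ?thesis
  proof (intro exI[of _ C] conjI allI impI C0)
    fix R :: real and u :: "'a \<Rightarrow> real"
    assume R: "R > 0" and u: "u \<in> borel_measurable lebesgue"
    obtain v where v: "v \<in> borel_measurable lborel" and ae: "AE x in lborel. u x = v x"
      using completion_ex_borel_measurable_real[OF u] by blast
    have rc: "riesz_conv \<alpha> u = riesz_conv \<alpha> v"
    proof
      fix x
      show "riesz_conv \<alpha> u x = riesz_conv \<alpha> v x"
        unfolding riesz_conv_lborel by (rule nn_integral_cong_AE) (use ae in auto)
    qed
    have "(\<integral>\<^sup>+ x\<in>- ball 0 R. ennreal (\<bar>u x\<bar> / norm x powr (\<alpha> - real DIM('a) / q + \<delta>)) \<partial>lebesgue)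
       = (\<integral>\<^sup>+x. ennreal \<bar>v x\<bar> * ennreal (if x \<in> - ball 0 R then 1 / norm x powr (\<alpha> - real DIM('a) / q + \<delta>) else 0) \<partial>lborel)"
      unfolding nn_integral_completion
      by (rule nn_integral_cong_AE) (use ae in \<open>auto simp: indicator_def ennreal_mult[symmetric]\<close>)
    also have "\<dots> \<le> ennreal (C1 * R powr (-\<delta>)) * Lq_norm_enn q (riesz_conv \<alpha> u)"
      using H1 R v rc by simp
    also have "\<dots> \<le> ennreal (C / R powr \<delta>) * Lq_norm_enn q (riesz_conv \<alpha> u)"
      using R by (intro mult_right_mono ennreal_leI) (auto simp: C_def powr_minus_divide divide_right_mono)
    finally show "(\<integral>\<^sup>+ x\<in>- ball 0 R. ennreal (\<bar>u x\<bar> / norm x powr (\<alpha> - real DIM('a) / q + \<delta>)) \<partial>lebesgue)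
       \<le> ennreal (C / R powr \<delta>) * Lq_norm_enn q (riesz_conv \<alpha> u)" .
    have "(\<integral>\<^sup>+ x\<in>ball 0 R. ennreal (\<bar>u x\<bar> / norm x powr (\<alpha> - real DIM('a) / q - \<delta>)) \<partial>lebesgue)
       = (\<integral>\<^sup>+x. ennreal \<bar>v x\<bar> * ennreal (if x \<in> ball 0 R then 1 / norm x powr (\<alpha> - real DIM('a) / q - \<delta>) else 0) \<partial>lborel)"
      unfolding nn_integral_completion
      by (rule nn_integral_cong_AE) (use ae in \<open>auto simp: indicator_def ennreal_mult[symmetric]\<close>)
    also have "\<dots> \<le> ennreal (C2 * R powr \<delta>) * Lq_norm_enn q (riesz_conv \<alpha> u)"
      using H2 R v rc by simp
    also have "\<dots> \<le> ennreal (C * R powr \<delta>) * Lq_norm_enn q (riesz_conv \<alpha> u)"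
      using R by (intro mult_right_mono ennreal_leI) (auto simp: C_def intro: mult_right_mono)
    finally show "(\<integral>\<^sup>+ x\<in>ball 0 R. ennreal (\<bar>u x\<bar> / norm x powr (\<alpha> - real DIM('a) / q - \<delta>)) \<partial>lebesgue)
        \<le> ennreal (C * R powr \<delta>) * Lq_norm_enn q (riesz_conv \<alpha> u)" .
  qed
qed


end
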